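(* Let $\Delta=\{q\in\mathbb R_+^C:\sum_cq_c=1\}$ and let $\widehat p$ be in the relative interior of $\Delta$ (all entries positive). For any $\widehat t,t^\star\in\mathbb R^C$, any $\rho\in\mathbb R_+^C$ and any $\varepsilon\ge\widehat p^\top\rho$, \[\sup\Big\{q^\top t^\star-\widehat p^\top\widehat t:\ q\in\Delta,\ \sum_{c=1}^Cq_c(\log q_c-\log\widehat p_c+\rho_c)\le\varepsilon\Big\}\le\|t^\star-\widehat t\|_\infty+\frac{\sqrt{2\varepsilon}}{\min_c\sqrt{\widehat p_c}}\sqrt{\sum_{c=1}^C\widehat p_c(\widehat t_c-\bar t)^2},\] where $\bar t=\widehat p^\top\widehat t$.
   Context: The convention $0\log0=0$ is used. *)

theory Defs
  imports "HOL-Analysis.Analysis"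
begin

definition prob_simplex :: "('c::finite \<Rightarrow> real) set" where
  "prob_simplex = {q. (\<forall>c. q c \<ge> 0) \<and> (\<Sum>c\<in>UNIV. q c) = 1}"

text \<open>The term q_c (log q_c - log p_c + rho_c), with the convention 0 log 0 = 0:
  it is taken to be 0 when q_c = 0.\<close>
definition klterm :: "real \<Rightarrow> real \<Rightarrow> real \<Rightarrow> real" where
  "klterm q p r = (if q = 0 then 0 else q * (ln q - ln p + r))"

end

theory Submission
  imports Defs
begin

lemma ln_lower_aux:
  fixes x :: real assumes "x \<ge> 1" shows "ln x \<ge> 2 * (x - 1) / (x + 1)"
proof -
  have "(\<lambda>x. ln x - 2 * (x - 1) / (x + 1)) 1 \<le> (\<lambda>x. ln x - 2 * (x - 1) / (x + 1)) x"
  proof (rule DERIV_nonneg_imp_nondecreasing[OF assms])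
    fix y :: real assume y0: "1 \<le> y" "y \<le> x"
    then have y: "1 \<le> y \<and> y \<le> x" by simp
    have d: "((\<lambda>x. ln x - 2 * (x - 1) / (x + 1)) has_real_derivative (1/y - 4/(y+1)^2)) (at y)"
      using y apply (auto intro!: derivative_eq_intros)
      apply (subgoal_tac "y + 1 \<noteq> 0")
      apply (simp add: divide_simps power2_eq_square)
      apply (simp add: algebra_simps)
      done
    have yy: "y > 0" "(y+1)^2 > 0" using y by auto
    have e: "(y+1)^2 - 4*y = (y-1)^2" by (simp add: power2_eq_square algebra_simps)
    have "4*y \<le> (y+1)^2" using e zero_le_power2[of "y-1"] by linarith
    then have "4/(y+1)^2 \<le> 4/(4*y)" using yy by (intro divide_left_mono) auto
    then have "1/y - 4/(y+1)^2 \<ge> 0" using yy by simp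
    then show "\<exists>D. ((\<lambda>x. ln x - 2 * (x - 1) / (x + 1)) has_real_derivative D) (at y) \<and> D \<ge> 0" using d by blast
  qed
  then show ?thesis by simp
qed

lemma ln_upper_aux:
  fixes x :: real assumes "x \<ge> 1" shows "ln x \<le> (x - 1/x) / 2"
proof -
  have "(\<lambda>x. (x - 1/x) / 2 - ln x) 1 \<le> (\<lambda>x. (x - 1/x) / 2 - ln x) x"
  proof (rule DERIV_nonneg_imp_nondecreasing[OF assms])
    fix y :: real assume y0: "1 \<le> y" "y \<le> x"
    then have y: "1 \<le> y \<and> y \<le> x" by simp
    have d: "((\<lambda>x. (x - 1/x) / 2 - ln x) has_real_derivative ((1 + 1/y^2)/2 - 1/y)) (at y)"
      using y by (auto intro!: derivative_eq_intros simp: field_simps power2_eq_square)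
    have "(1 + 1/y^2)/2 - 1/y = (1 - 1/y)^2/2" using y by (simp add: field_simps power2_eq_square)
    also have "\<dots> \<ge> 0" by simp
    finally show "\<exists>D. ((\<lambda>x. (x - 1/x) / 2 - ln x) has_real_derivative D) (at y) \<and> D \<ge> 0" using d by blast
  qed
  then show ?thesis by simp
qed

lemma klterm_lower:
  fixes q p r :: real assumes "0 \<le> q" "q \<le> 1" "0 < p" "p \<le> 1" "r \<ge> 0"
  shows "klterm q p r \<ge> (q - p) + (q - p)^2 / 2"
proof (cases "q = 0")
  case True then show ?thesis using assms by (simp add: klterm_def power2_eq_square)
next
  case False
  then have q: "q > 0" using assms by simp
  have kl: "klterm q p r \<ge> q * (ln q - ln p)" using False assms by (simp add: klterm_def algebra_simps)
  show ?thesis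
  proof (cases "q \<ge> p")
    case True
    have "ln q - ln p = ln (q/p)" using q assms by (simp add: ln_div)
    also have "\<dots> \<ge> 2 * (q/p - 1) / (q/p + 1)" using True assms by (intro ln_lower_aux) simp
    also have "2 * (q/p - 1) / (q/p + 1) = 2 * (q - p) / (q + p)"
    proof -
      have "q/p - 1 = (q-p)/p" "q/p + 1 = (q+p)/p" using assms by (simp_all add: field_simps)
      moreover have "q + p \<noteq> 0" "p \<noteq> 0" using assms q by auto
      ultimately show ?thesis by simp
    qed
    finally have "ln q - ln p \<ge> 2 * (q - p) / (q + p)" .
    then have "q * (ln q - ln p) \<ge> q * (2 * (q - p) / (q + p))" using q by (intro mult_left_mono) auto
    moreover have "q * (2 * (q - p) / (q + p)) = (q - p) + (q-p)^2/(q+p)"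
    proof -
      have qp: "q + p > 0" using q assms by simp
      have "(q - p) + (q-p)^2/(q+p) = ((q-p)*(q+p) + (q-p)^2)/(q+p)" using qp by (simp add: field_simps)
      also have "(q-p)*(q+p) + (q-p)^2 = q * (2 * (q - p))" by (simp add: power2_eq_square algebra_simps)
      finally show ?thesis by simp
    qed
    moreover have "(q-p)^2/(q+p) \<ge> (q-p)^2/2" using q assms by (intro divide_left_mono) auto
    ultimately show ?thesis using kl by linarith
  next
    case False
    have "ln p - ln q = ln (p/q)" using q assms by (simp add: ln_div)
    also have "\<dots> \<le> (p/q - 1/(p/q)) / 2" using False q by (intro ln_upper_aux) simp
    finally have "ln p - ln q \<le> (p/q - q/p) / 2" by simp
    then have "q * (ln p - ln q) \<le> q * ((p/q - q/p) / 2)" using q by (intro mult_left_mono) auto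
    moreover have "q * ((p/q - q/p) / 2) = -(q - p) - (q-p)^2/(2*p)"
    proof -
      have "q * ((p/q - q/p) / 2) = (p - q*q/p)/2" using q by (simp add: field_simps)
      also have "\<dots> = (p*p - q*q)/(2*p)" using assms by (simp add: field_simps)
      also have "p*p - q*q = -(q-p)*(2*p) - (q-p)^2" by (simp add: power2_eq_square algebra_simps)
      also have "(-(q-p)*(2*p) - (q-p)^2)/(2*p) = -(q - p) - (q-p)^2/(2*p)" using assms by (simp add: field_simps)
      finally show ?thesis .
    qed
    moreover have "(q-p)^2/(2*p) \<ge> (q-p)^2/2" using q assms by (intro divide_left_mono) auto
    moreover have "q * (ln p - ln q) = - (q * (ln q - ln p))" by (simp add: algebra_simps)
    ultimately show ?thesis using kl by linarith
  qed
qed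


theorem lemmaC1:
  fixes p t tstar rho :: "'c::finite \<Rightarrow> real" and eps :: real
  assumes "p \<in> prob_simplex" and "\<forall>c. p c > 0"
    and "\<forall>c. rho c \<ge> 0"
    and "eps \<ge> (\<Sum>c\<in>UNIV. p c * rho c)"
  shows "Sup {(\<Sum>c\<in>UNIV. q c * tstar c) - (\<Sum>c\<in>UNIV. p c * t c) | q.
              q \<in> prob_simplex \<and> (\<Sum>c\<in>UNIV. klterm (q c) (p c) (rho c)) \<le> eps}
         \<le> (MAX c\<in>UNIV. \<bar>tstar c - t c\<bar>)
           + sqrt (2 * eps) / (MIN c\<in>UNIV. sqrt (p c))
             * sqrt (\<Sum>c\<in>UNIV. p c * (t c - (\<Sum>d\<in>UNIV. p d * t d))\<^sup>2)"
    (is "Sup ?S \<le> ?M + sqrt (2 * eps) / ?m * sqrt ?V")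
proof -
  have p0: "\<And>c. p c > 0" using assms(2) by blast
  have psum: "(\<Sum>c\<in>UNIV. p c) = 1" using assms(1) by (simp add: prob_simplex_def)
  have p1: "p c \<le> 1" for c
  proof -
    have "p c \<le> (\<Sum>c\<in>UNIV. p c)" by (rule member_le_sum) (use p0 less_imp_le in auto)
    then show ?thesis using psum by simp
  qed
  have eps0: "eps \<ge> 0"
  proof -
    have "(\<Sum>c\<in>UNIV. p c * rho c) \<ge> 0" using p0 assms(3) by (intro sum_nonneg) (simp add: less_imp_le)
    then show ?thesis using assms(4) by linarith
  qed
  define tb where "tb = (\<Sum>d\<in>UNIV. p d * t d)"
  define s where "s c = t c - tb" for c
  define m where "m = (MIN c\<in>UNIV. sqrt (p c))"
  have mpos: "m > 0" unfolding m_def using p0 by (simp add: Min_gr_iff)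
  have mle: "m \<le> sqrt (p c)" for c unfolding m_def by (rule Min_le) auto
  have bound: "x \<le> ?M + sqrt (2 * eps) / m * sqrt ?V" if "x \<in> ?S" for x
  proof -
    obtain q where x: "x = (\<Sum>c\<in>UNIV. q c * tstar c) - (\<Sum>c\<in>UNIV. p c * t c)"
      and qs: "q \<in> prob_simplex" and qkl: "(\<Sum>c\<in>UNIV. klterm (q c) (p c) (rho c)) \<le> eps"
      using \<open>x \<in> ?S\<close> by blast
    have q0: "\<And>c. q c \<ge> 0" and qsum: "(\<Sum>c\<in>UNIV. q c) = 1" using qs by (auto simp: prob_simplex_def)
    have q1: "q c \<le> 1" for c
    proof -
      have "q c \<le> (\<Sum>c\<in>UNIV. q c)" by (rule member_le_sum) (use q0 in auto)
      then show ?thesis using qsum by simp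
    qed
    have split: "x = (\<Sum>c\<in>UNIV. q c * (tstar c - t c)) + (\<Sum>c\<in>UNIV. (q c - p c) * s c)"
    proof -
      have "(\<Sum>c\<in>UNIV. (q c - p c) * s c) = (\<Sum>c\<in>UNIV. q c * t c) - (\<Sum>c\<in>UNIV. p c * t c) - tb * ((\<Sum>c\<in>UNIV. q c) - (\<Sum>c\<in>UNIV. p c))"
        by (simp add: s_def algebra_simps sum_subtractf sum_distrib_left sum_distrib_right sum.distrib)
      also have "\<dots> = (\<Sum>c\<in>UNIV. q c * t c) - (\<Sum>c\<in>UNIV. p c * t c)" using qsum psum by simp
      finally show ?thesis unfolding x by (simp add: algebra_simps sum_subtractf)
    qed
    have part1: "(\<Sum>c\<in>UNIV. q c * (tstar c - t c)) \<le> ?M"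
    proof -
      have "(\<Sum>c\<in>UNIV. q c * (tstar c - t c)) \<le> (\<Sum>c\<in>UNIV. q c * ?M)"
      proof (rule sum_mono)
        fix c
        have "tstar c - t c \<le> ?M" by (rule order_trans[OF abs_ge_self]) (rule Max_ge, auto)
        then show "q c * (tstar c - t c) \<le> q c * ?M" using q0 by (intro mult_left_mono) auto
      qed
      also have "\<dots> = ?M" using qsum by (simp add: sum_distrib_right[symmetric])
      finally show ?thesis .
    qed
    have sq: "(\<Sum>c\<in>UNIV. (q c - p c)^2) \<le> 2 * eps"
    proof -
      have "(\<Sum>c\<in>UNIV. (q c - p c) + (q c - p c)^2 / 2) \<le> (\<Sum>c\<in>UNIV. klterm (q c) (p c) (rho c))"
        by (rule sum_mono) (intro klterm_lower, use q0 q1 p0 p1 assms(3) in auto)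
      moreover have "(\<Sum>c\<in>UNIV. (q c - p c) + (q c - p c)^2 / 2) = (\<Sum>c\<in>UNIV. (q c - p c)^2) / 2"
        using qsum psum by (simp add: sum.distrib sum_subtractf sum_divide_distrib)
      ultimately show ?thesis using qkl by linarith
    qed
    define a where "a c = (q c - p c) / sqrt (p c)" for c
    define b where "b c = sqrt (p c) * s c" for c
    have ab: "(\<Sum>c\<in>UNIV. (q c - p c) * s c) = (\<Sum>c\<in>UNIV. a c * b c)"
      using p0 by (intro sum.cong) (auto simp: a_def b_def less_imp_neq[symmetric])
    have bb: "(\<Sum>c\<in>UNIV. (b c)^2) = ?V"
      using p0 by (intro sum.cong) (auto simp: b_def s_def tb_def power_mult_distrib less_imp_le)
    have aa: "(\<Sum>c\<in>UNIV. (a c)^2) \<le> 2 * eps / m^2"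
    proof -
      have "(\<Sum>c\<in>UNIV. (a c)^2) \<le> (\<Sum>c\<in>UNIV. (q c - p c)^2 / m^2)"
      proof (rule sum_mono)
        fix c
        have "m^2 \<le> (sqrt (p c))^2" by (intro power_mono[OF mle] less_imp_le[OF mpos])
        then have "m^2 \<le> p c" using p0[of c] by simp
        moreover have "m^2 > 0" using mpos by simp
        ultimately have "(q c - p c)^2 / p c \<le> (q c - p c)^2 / m^2"
          using p0[of c] by (intro divide_left_mono) (auto intro: mult_pos_pos)
        then show "(a c)^2 \<le> (q c - p c)^2 / m^2" using p0[of c] by (simp add: a_def power_divide less_imp_le)
      qed
      also have "\<dots> = (\<Sum>c\<in>UNIV. (q c - p c)^2) / m^2" by (simp add: sum_divide_distrib)
      also have "\<dots> \<le> 2 * eps / m^2" using sq mpos by (intro divide_right_mono) auto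
      finally show ?thesis .
    qed
    have "(\<Sum>c\<in>UNIV. (q c - p c) * s c)^2 \<le> (\<Sum>c\<in>UNIV. (a c)^2) * (\<Sum>c\<in>UNIV. (b c)^2)"
      unfolding ab by (rule Cauchy_Schwarz_ineq_sum)
    also have "\<dots> \<le> (2 * eps / m^2) * ?V"
      unfolding bb using aa by (intro mult_right_mono) (auto intro!: sum_nonneg simp: less_imp_le p0)
    finally have cs: "(\<Sum>c\<in>UNIV. (q c - p c) * s c)^2 \<le> (2 * eps / m^2) * ?V" .
    have "(\<Sum>c\<in>UNIV. (q c - p c) * s c) \<le> sqrt ((\<Sum>c\<in>UNIV. (q c - p c) * s c)^2)"
      by (simp add: real_sqrt_abs)
    also have "\<dots> \<le> sqrt ((2 * eps / m^2) * ?V)" using cs by (rule real_sqrt_le_mono)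
    also have "\<dots> = sqrt (2 * eps) / m * sqrt ?V"
      using mpos eps0 by (simp add: real_sqrt_mult real_sqrt_divide)
    finally have part2: "(\<Sum>c\<in>UNIV. (q c - p c) * s c) \<le> sqrt (2 * eps) / m * sqrt ?V" .
    show ?thesis using split part1 part2 by linarith
  qed
  have ne: "?S \<noteq> {}"
  proof -
    have "p \<in> prob_simplex" by (rule assms(1))
    moreover have "(\<Sum>c\<in>UNIV. klterm (p c) (p c) (rho c)) \<le> eps"
      using assms(4) p0 by (simp add: klterm_def less_imp_neq[symmetric])
    ultimately show ?thesis by blast
  qed
  have "Sup ?S \<le> ?M + sqrt (2 * eps) / m * sqrt ?V" by (rule cSup_least[OF ne]) (use bound in blast)
  then show ?thesis unfolding m_def .
qed

end
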